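(* Let $L_1,\dots,L_r$ be linear functionals on complex Laurent polynomials satisfying $L_j[w^k]=L_j[w^{-k}]$ for all $k\in\mathbb N$ and all $j$. Then for $(\bm n;\bm m)\in\mathfrak C_{2r}$, $(\bm n;\bm m)$ is normal if and only if $(\bm m;\bm n)$ is normal, and in that case $\Phi^*_{\bm n;\bm m}(z)=\Phi_{\bm m;\bm n}(1/z)$, $\bm\Xi^*_{\bm n;\bm m}(z)=\bm\Xi_{\bm m;\bm n}(1/z)$, $\alpha_{\bm n;\bm m}=\beta_{\bm m;\bm n}$, $\rho_{\bm n;\bm m,j}=\sigma_{\bm m;\bm n,j}$ (whenever these are defined), and $\gamma^{k\ell}_{\bm n;\bm m}=\eta^{k\ell}_{\bm m;\bm n}$ (whenever these are defined).
   Context: Fix $r\ge1$; $\mathbb N=\{0,1,2,\dots\}$; $\bm e_j$ is the $j$-th standard unit vector of $\mathbb Z^r$; for $\bm v\in\mathbb Z^r$, $|\bm v|=v_1+\dots+v_r$ (signed). Let $c_{k,j}=L_j[w^{-k}]$. $\mathfrak C_{2r}=\{(\bm n;\bm m)\in\mathbb Z^r\times\mathbb Z^r:n_j+m_j\ge0\ \forall j\}$. For $(\bm n;\bm m)\in\mathfrak C_{2r}$, $\bm n\ne-\bm m$, $T_{\bm n;\bm m}$ is the square matrix of size $|\bm n|+|\bm m|$ with rows indexed by $(j,k)$, $1\le j\le r$, $-m_j\le k\le n_j-1$ (ordered by $j$, then increasing $k$), columns indexed by $i=-|\bm m|,\dots,|\bm n|-1$, entries $c_{k-i,j}$; $T_{\bm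 n;-\bm n}:=1$; normal means $\det T_{\bm n;\bm m}\ne0$. For normal $(\bm n;\bm m)$, $\bm n\ne-\bm m$: $\Phi_{\bm n;\bm m}$ is the unique Laurent polynomial in $\operatorname{span}\{z^k\}_{k=-|\bm m|}^{|\bm n|}$ with $z^{|\bm n|}$-coefficient $1$ and $L_j[\Phi_{\bm n;\bm m}(w)w^{-k}]=0$ for $-m_j\le k\le n_j-1$, all $j$; $\Phi^*_{\bm n;\bm m}$ is the unique one in that span with $z^{-|\bm m|}$-coefficient $1$ and $L_j[\Phi^*_{\bm n;\bm m}(w)w^{-k}]=0$ for $-m_j+1\le k\le n_j$; $\bm\Xi_{\bm n;\bm m}=(\Xi_{\bm n;\bm m,j})_{j=1}^r$ is the unique vector with $\Xi_{\bm n;\bm m,j}\in\operatorname{span}\{z^k\}_{k=-n_j}^{m_j-1}$, $\sum_jL_j[\Xi_{\bm n;\bm m,j}(w)w^{-k}]=0$ for $-|\bm n|+1\le k\le|\bm m|-1$ and $=1$ for $k=-|\bm n|$; $\bm\Xi^*_{\bm n;\bm m}$ is the unique vector with $\Xi^*_{\bm n;\bm m,j}\in\operatorname{span}\{z^k\}_{k=-n_j+1}^{m_j}$, the same vanishing conditions, and $=1$ for $k=|\bm m|$. For $\bm n=-\bm m$: $\Phi=\Phi^*=1$, $\bm\Xi=\bm\Xi^*=\bm0$. $\alpha_{\bm n;\bm m}$ := $z^{-|\bm m|}$-coefficient of $\Phi_{\bm n;\bm m}$; $\beta_{\bm n;\bm m}$ := $z^{|\bm n|}$-coefficient of $\Phi^*_{\bm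 n;\bm m}$. $\rho_{\bm n;\bm m,j}=L_j[\Phi_{\bm n;\bm m}(w)w^{-n_j}]/L_j[\Phi_{\bm n-\bm e_j;\bm m}(w)w^{-n_j+1}]$ (defined when $(\bm n;\bm m),(\bm n-\bm e_j;\bm m)\in\mathfrak C_{2r}$ are normal) and $\sigma_{\bm n;\bm m,j}=L_j[\Phi^*_{\bm n;\bm m}(w)w^{m_j}]/L_j[\Phi^*_{\bm n;\bm m-\bm e_j}(w)w^{m_j-1}]$ (defined when $(\bm n;\bm m),(\bm n;\bm m-\bm e_j)\in\mathfrak C_{2r}$ are normal). For $k\ne\ell$: $\gamma^{k\ell}_{\bm n;\bm m}=L_\ell[\Phi_{\bm n+\bm e_k;\bm m}(w)w^{-n_\ell}]/L_\ell[\Phi_{\bm n;\bm m}(w)w^{-n_\ell}]$ (defined when $(\bm n;\bm m),(\bm n+\bm e_k;\bm m),(\bm n+\bm e_\ell;\bm m)$ are normal) and $\eta^{k\ell}_{\bm n;\bm m}=L_\ell[\Phi^*_{\bm n;\bm m+\bm e_k}(w)w^{m_\ell}]/L_\ell[\Phi^*_{\bm n;\bm m}(w)w^{m_\ell}]$ (defined when $(\bm n;\bm m),(\bm n;\bm m+\bm e_k),(\bm n;\bm m+\bm e_\ell)$ are normal). *)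

theory Defs
  imports Complex_Main "Jordan_Normal_Form.Determinant"
begin

text \<open>Indices j range over {0..<r} (0-based instead of 1..r).
  Multi-indices n, m are functions nat => int; only values at j < r matter.
  A Laurent polynomial is its coefficient function int => complex
  (finitely supported); a linear functional on Laurent polynomials is a
  map L :: (int => complex) => complex that is linear on finitely supported
  coefficient functions.\<close>

type_synonym lpoly = "int \<Rightarrow> complex"

definition fin_supp :: "lpoly \<Rightarrow> bool" where
  "fin_supp p \<longleftrightarrow> finite {i. p i \<noteq> 0}"

definition lin_functional :: "(lpoly \<Rightarrow> complex) \<Rightarrow> bool" where
  "lin_functional L \<longleftrightarrow>
     (\<forall>p q. fin_supp p \<longrightarrow> fin_supp q \<longrightarrow> L (\<lambda>i. p i + q i) = L p + L q) \<and>
     (\<forall>c p. fin_supp p \<longrightarrow> L (\<lambda>i. c * p i) = c * L p)"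

definition mono :: "int \<Rightarrow> lpoly" where
  "mono k = (\<lambda>i. if i = k then 1 else 0)"

text \<open>multiplication by w^s\<close>
definition lshift :: "lpoly \<Rightarrow> int \<Rightarrow> lpoly" where
  "lshift p s = (\<lambda>i. p (i - s))"

definition leval :: "lpoly \<Rightarrow> complex \<Rightarrow> complex" where
  "leval p z = (\<Sum>i\<in>{i. p i \<noteq> 0}. p i * z powi i)"

definition in_span :: "int \<Rightarrow> int \<Rightarrow> lpoly \<Rightarrow> bool" where
  "in_span a b p \<longleftrightarrow> (\<forall>i. p i \<noteq> 0 \<longrightarrow> a \<le> i \<and> i \<le> b)"

definition vabs :: "nat \<Rightarrow> (nat \<Rightarrow> int) \<Rightarrow> int" where
  "vabs r v = (\<Sum>j<r. v j)"

definition unitv :: "nat \<Rightarrow> nat \<Rightarrow> int" where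
  "unitv j = (\<lambda>i. if i = j then 1 else 0)"

definition vadd :: "(nat \<Rightarrow> int) \<Rightarrow> (nat \<Rightarrow> int) \<Rightarrow> nat \<Rightarrow> int" where
  "vadd u v = (\<lambda>i. u i + v i)"

definition vsub :: "(nat \<Rightarrow> int) \<Rightarrow> (nat \<Rightarrow> int) \<Rightarrow> nat \<Rightarrow> int" where
  "vsub u v = (\<lambda>i. u i - v i)"

definition inC :: "nat \<Rightarrow> (nat \<Rightarrow> int) \<Rightarrow> (nat \<Rightarrow> int) \<Rightarrow> bool" where
  "inC r n m \<longleftrightarrow> (\<forall>j<r. n j + m j \<ge> 0)"

definition antidiag :: "nat \<Rightarrow> (nat \<Rightarrow> int) \<Rightarrow> (nat \<Rightarrow> int) \<Rightarrow> bool" where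
  "antidiag r n m \<longleftrightarrow> (\<forall>j<r. n j = - m j)"

definition cmom :: "(nat \<Rightarrow> lpoly \<Rightarrow> complex) \<Rightarrow> int \<Rightarrow> nat \<Rightarrow> complex" where
  "cmom L k j = L j (mono (- k))"

definition Trows :: "nat \<Rightarrow> (nat \<Rightarrow> int) \<Rightarrow> (nat \<Rightarrow> int) \<Rightarrow> (nat \<times> int) list" where
  "Trows r n m = concat (map (\<lambda>j. map (\<lambda>k. (j, k)) [- m j..n j - 1]) [0..<r])"

text \<open>the matrix T_{n;m}: columns indexed by i = -|m|, ..., |n|-1\<close>
definition Tmat :: "nat \<Rightarrow> (nat \<Rightarrow> lpoly \<Rightarrow> complex) \<Rightarrow> (nat \<Rightarrow> int) \<Rightarrow> (nat \<Rightarrow> int) \<Rightarrow> complex mat" where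
  "Tmat r L n m = (let N = nat (vabs r n + vabs r m) in
     mat N N (\<lambda>(a, b). let (j, k) = Trows r n m ! a; i = int b - vabs r m
                        in cmom L (k - i) j))"

definition normal :: "nat \<Rightarrow> (nat \<Rightarrow> lpoly \<Rightarrow> complex) \<Rightarrow> (nat \<Rightarrow> int) \<Rightarrow> (nat \<Rightarrow> int) \<Rightarrow> bool" where
  "normal r L n m \<longleftrightarrow> inC r n m \<and> (antidiag r n m \<or> det (Tmat r L n m) \<noteq> 0)"

definition Phi :: "nat \<Rightarrow> (nat \<Rightarrow> lpoly \<Rightarrow> complex) \<Rightarrow> (nat \<Rightarrow> int) \<Rightarrow> (nat \<Rightarrow> int) \<Rightarrow> lpoly" where
  "Phi r L n m = (if antidiag r n m then mono 0 else
     (THE p. in_span (- vabs r m) (vabs r n) p \<and> p (vabs r n) = 1 \<and>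
        (\<forall>j<r. \<forall>k. - m j \<le> k \<and> k \<le> n j - 1 \<longrightarrow> L j (lshift p (- k)) = 0)))"

definition Phistar :: "nat \<Rightarrow> (nat \<Rightarrow> lpoly \<Rightarrow> complex) \<Rightarrow> (nat \<Rightarrow> int) \<Rightarrow> (nat \<Rightarrow> int) \<Rightarrow> lpoly" where
  "Phistar r L n m = (if antidiag r n m then mono 0 else
     (THE p. in_span (- vabs r m) (vabs r n) p \<and> p (- vabs r m) = 1 \<and>
        (\<forall>j<r. \<forall>k. - m j + 1 \<le> k \<and> k \<le> n j \<longrightarrow> L j (lshift p (- k)) = 0)))"

definition Xi :: "nat \<Rightarrow> (nat \<Rightarrow> lpoly \<Rightarrow> complex) \<Rightarrow> (nat \<Rightarrow> int) \<Rightarrow> (nat \<Rightarrow> int) \<Rightarrow> nat \<Rightarrow> lpoly" where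
  "Xi r L n m = (if antidiag r n m then (\<lambda>j i. 0) else
     (THE X. (\<forall>j. r \<le> j \<longrightarrow> X j = (\<lambda>i. 0)) \<and>
        (\<forall>j<r. in_span (- n j) (m j - 1) (X j)) \<and>
        (\<forall>k. - vabs r n + 1 \<le> k \<and> k \<le> vabs r m - 1 \<longrightarrow>
              (\<Sum>j<r. L j (lshift (X j) (- k))) = 0) \<and>
        (\<Sum>j<r. L j (lshift (X j) (vabs r n))) = 1))"

definition Xistar :: "nat \<Rightarrow> (nat \<Rightarrow> lpoly \<Rightarrow> complex) \<Rightarrow> (nat \<Rightarrow> int) \<Rightarrow> (nat \<Rightarrow> int) \<Rightarrow> nat \<Rightarrow> lpoly" where
  "Xistar r L n m = (if antidiag r n m then (\<lambda>j i. 0) else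
     (THE X. (\<forall>j. r \<le> j \<longrightarrow> X j = (\<lambda>i. 0)) \<and>
        (\<forall>j<r. in_span (- n j + 1) (m j) (X j)) \<and>
        (\<forall>k. - vabs r n + 1 \<le> k \<and> k \<le> vabs r m - 1 \<longrightarrow>
              (\<Sum>j<r. L j (lshift (X j) (- k))) = 0) \<and>
        (\<Sum>j<r. L j (lshift (X j) (- vabs r m))) = 1))"

definition alpha :: "nat \<Rightarrow> (nat \<Rightarrow> lpoly \<Rightarrow> complex) \<Rightarrow> (nat \<Rightarrow> int) \<Rightarrow> (nat \<Rightarrow> int) \<Rightarrow> complex" where
  "alpha r L n m = Phi r L n m (- vabs r m)"

definition beta :: "nat \<Rightarrow> (nat \<Rightarrow> lpoly \<Rightarrow> complex) \<Rightarrow> (nat \<Rightarrow> int) \<Rightarrow> (nat \<Rightarrow> int) \<Rightarrow> complex" where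
  "beta r L n m = Phistar r L n m (vabs r n)"

definition rho :: "nat \<Rightarrow> (nat \<Rightarrow> lpoly \<Rightarrow> complex) \<Rightarrow> (nat \<Rightarrow> int) \<Rightarrow> (nat \<Rightarrow> int) \<Rightarrow> nat \<Rightarrow> complex" where
  "rho r L n m j = L j (lshift (Phi r L n m) (- n j)) /
                   L j (lshift (Phi r L (vsub n (unitv j)) m) (- n j + 1))"

definition rho_defined :: "nat \<Rightarrow> (nat \<Rightarrow> lpoly \<Rightarrow> complex) \<Rightarrow> (nat \<Rightarrow> int) \<Rightarrow> (nat \<Rightarrow> int) \<Rightarrow> nat \<Rightarrow> bool" where
  "rho_defined r L n m j \<longleftrightarrow> normal r L n m \<and> normal r L (vsub n (unitv j)) m"

definition sigma :: "nat \<Rightarrow> (nat \<Rightarrow> lpoly \<Rightarrow> complex) \<Rightarrow> (nat \<Rightarrow> int) \<Rightarrow> (nat \<Rightarrow> int) \<Rightarrow> nat \<Rightarrow> complex" where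
  "sigma r L n m j = L j (lshift (Phistar r L n m) (m j)) /
                     L j (lshift (Phistar r L n (vsub m (unitv j))) (m j - 1))"

definition sigma_defined :: "nat \<Rightarrow> (nat \<Rightarrow> lpoly \<Rightarrow> complex) \<Rightarrow> (nat \<Rightarrow> int) \<Rightarrow> (nat \<Rightarrow> int) \<Rightarrow> nat \<Rightarrow> bool" where
  "sigma_defined r L n m j \<longleftrightarrow> normal r L n m \<and> normal r L n (vsub m (unitv j))"

definition gamma :: "nat \<Rightarrow> (nat \<Rightarrow> lpoly \<Rightarrow> complex) \<Rightarrow> (nat \<Rightarrow> int) \<Rightarrow> (nat \<Rightarrow> int) \<Rightarrow> nat \<Rightarrow> nat \<Rightarrow> complex" where
  "gamma r L n m k l = L l (lshift (Phi r L (vadd n (unitv k)) m) (- n l)) /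
                       L l (lshift (Phi r L n m) (- n l))"

definition gamma_defined :: "nat \<Rightarrow> (nat \<Rightarrow> lpoly \<Rightarrow> complex) \<Rightarrow> (nat \<Rightarrow> int) \<Rightarrow> (nat \<Rightarrow> int) \<Rightarrow> nat \<Rightarrow> nat \<Rightarrow> bool" where
  "gamma_defined r L n m k l \<longleftrightarrow> k \<noteq> l \<and> normal r L n m \<and>
      normal r L (vadd n (unitv k)) m \<and> normal r L (vadd n (unitv l)) m"

definition eta :: "nat \<Rightarrow> (nat \<Rightarrow> lpoly \<Rightarrow> complex) \<Rightarrow> (nat \<Rightarrow> int) \<Rightarrow> (nat \<Rightarrow> int) \<Rightarrow> nat \<Rightarrow> nat \<Rightarrow> complex" where
  "eta r L n m k l = L l (lshift (Phistar r L n (vadd m (unitv k))) (m l)) /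
                     L l (lshift (Phistar r L n m) (m l))"

definition eta_defined :: "nat \<Rightarrow> (nat \<Rightarrow> lpoly \<Rightarrow> complex) \<Rightarrow> (nat \<Rightarrow> int) \<Rightarrow> (nat \<Rightarrow> int) \<Rightarrow> nat \<Rightarrow> nat \<Rightarrow> bool" where
  "eta_defined r L n m k l \<longleftrightarrow> k \<noteq> l \<and> normal r L n m \<and>
      normal r L n (vadd m (unitv k)) \<and> normal r L n (vadd m (unitv l))"

end

theory Submission
  imports Defs
begin


definition lrefl :: "lpoly \<Rightarrow> lpoly" where "lrefl p = (\<lambda>i. p (- i))"

lemma fin_supp_in_span: "in_span a b p \<Longrightarrow> fin_supp p"
  unfolding fin_supp_def in_span_def
  by (rule finite_subset[of _ "{a..b}"]) auto

lemma fin_supp_mono[simp]: "fin_supp (mono k)"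
  unfolding fin_supp_def mono_def by (rule finite_subset[of _ "{k}"]) auto

lemma fin_supp_zero[simp]: "fin_supp (\<lambda>i. 0)"
  unfolding fin_supp_def by simp

lemma fin_supp_add: "fin_supp p \<Longrightarrow> fin_supp q \<Longrightarrow> fin_supp (\<lambda>i. p i + q i)"
  unfolding fin_supp_def
  by (rule finite_subset[of _ "{i. p i \<noteq> 0} \<union> {i. q i \<noteq> 0}"]) auto

lemma fin_supp_smult: "fin_supp p \<Longrightarrow> fin_supp (\<lambda>i. c * p i)"
  unfolding fin_supp_def
  by (rule finite_subset[of _ "{i. p i \<noteq> 0}"]) auto

lemma fin_supp_sum: "finite S \<Longrightarrow> (\<forall>s\<in>S. fin_supp (g s)) \<Longrightarrow> fin_supp (\<lambda>x. \<Sum>s\<in>S. c s * g s x)"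
proof (induction S rule: finite_induct)
  case empty then show ?case by simp
next
  case (insert a S)
  have "fin_supp (\<lambda>x. c a * g a x + (\<Sum>s\<in>S. c s * g s x))"
    using fin_supp_add[OF fin_supp_smult[of "g a" "c a"]] insert by blast
  then show ?case using insert(1,2) by (simp add: sum.insert)
qed

lemma lin_zero: "lin_functional L \<Longrightarrow> L (\<lambda>i. 0) = 0"
proof -
  assume "lin_functional L"
  then have "L (\<lambda>i. 0 * (\<lambda>i. 0) i) = 0 * L (\<lambda>i. 0)"
    unfolding lin_functional_def using fin_supp_zero by blast
  then show ?thesis by simp
qed

lemma lin_sum:
  assumes L: "lin_functional L" and S: "finite S" and g: "\<forall>s\<in>S. fin_supp (g s)"
  shows "L (\<lambda>x. \<Sum>s\<in>S. c s * g s x) = (\<Sum>s\<in>S. c s * L (g s))"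
  using S g
proof (induction S rule: finite_induct)
  case empty then show ?case using lin_zero[OF L] by simp
next
  case (insert a S)
  have f1: "fin_supp (\<lambda>x. c a * g a x)" using insert fin_supp_smult by auto
  have f2: "fin_supp (\<lambda>x. \<Sum>s\<in>S. c s * g s x)" using insert fin_supp_sum by auto
  have "L (\<lambda>x. \<Sum>s\<in>insert a S. c s * g s x) = L (\<lambda>x. c a * g a x + (\<Sum>s\<in>S. c s * g s x))"
    using insert by simp
  also have "\<dots> = L (\<lambda>x. c a * g a x) + L (\<lambda>x. \<Sum>s\<in>S. c s * g s x)"
    using L f1 f2 unfolding lin_functional_def by blast
  also have "L (\<lambda>x. c a * g a x) = c a * L (g a)"
    using L insert unfolding lin_functional_def by auto
  finally show ?case using insert by simp
qed

lemma expand_lshift: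
  assumes "in_span a b p"
  shows "lshift p s = (\<lambda>x. \<Sum>i\<in>{a..b}. p i * mono (i + s) x)"
proof
  fix x
  have "(\<Sum>i\<in>{a..b}. p i * mono (i + s) x) = (\<Sum>i\<in>{a..b}. if i = x - s then p i else 0)"
    by (rule sum.cong) (auto simp: mono_def)
  also have "\<dots> = lshift p s x"
    using assms unfolding in_span_def lshift_def by (auto simp: sum.delta')
  finally show "lshift p s x = (\<Sum>i\<in>{a..b}. p i * mono (i + s) x)" by simp
qed

lemma L_lshift:
  assumes L: "lin_functional L" and p: "in_span a b p"
  shows "L (lshift p s) = (\<Sum>i\<in>{a..b}. p i * L (mono (i + s)))"
  unfolding expand_lshift[OF p] by (rule lin_sum[OF L]) auto

lemma lshift_0[simp]: "lshift p 0 = p" unfolding lshift_def by simp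

lemma L_expand:
  assumes L: "lin_functional L" and p: "in_span a b p"
  shows "L p = (\<Sum>i\<in>{a..b}. p i * L (mono i))"
  using L_lshift[OF L p, of 0] by simp

lemma in_span_lrefl: "in_span a b p \<Longrightarrow> in_span (-b) (-a) (lrefl p)"
  unfolding in_span_def lrefl_def
proof (intro allI impI)
  fix i assume "\<forall>i. p i \<noteq> 0 \<longrightarrow> a \<le> i \<and> i \<le> b" "p (- i) \<noteq> 0"
  then have "a \<le> - i \<and> - i \<le> b" by blast
  then show "- b \<le> i \<and> i \<le> - a" by linarith
qed

lemma in_span_lshift: "in_span a b p \<Longrightarrow> in_span (a + s) (b + s) (lshift p s)"
  unfolding in_span_def lshift_def
proof (intro allI impI)
  fix i assume "\<forall>i. p i \<noteq> 0 \<longrightarrow> a \<le> i \<and> i \<le> b" "p (i - s) \<noteq> 0"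
  then have "a \<le> i - s \<and> i - s \<le> b" by blast
  then show "a + s \<le> i \<and> i \<le> b + s" by linarith
qed

lemma mono_symm:
  assumes symm: "\<forall>k::nat. L (mono (int k)) = L (mono (- int k))"
  shows "L (mono (- i)) = L (mono i)"
proof (cases "i \<ge> 0")
  case True
  then obtain k where "i = int k" using nonneg_eq_int by blast
  then show ?thesis using symm by simp
next
  case False
  then have "- i \<ge> 0" by simp
  then obtain k where "- i = int k" using nonneg_eq_int by blast
  then have "i = - int k" by simp
  then show ?thesis using symm by simp
qed

lemma L_lrefl:
  assumes L: "lin_functional L" and symm: "\<forall>k::nat. L (mono (int k)) = L (mono (- int k))"
    and p: "in_span a b p"
  shows "L (lrefl p) = L p"
proof -
  have "L (lrefl p) = (\<Sum>i\<in>{-b..-a}. lrefl p i * L (mono i))"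
    by (rule L_expand[OF L in_span_lrefl[OF p]])
  also have "\<dots> = (\<Sum>i\<in>{a..b}. p i * L (mono (- i)))"
    by (rule sum.reindex_bij_witness[of _ uminus uminus]) (auto simp: lrefl_def)
  also have "\<dots> = (\<Sum>i\<in>{a..b}. p i * L (mono i))"
    using mono_symm[OF symm] by simp
  also have "\<dots> = L p" using L_expand[OF L p] by simp
  finally show ?thesis .
qed

lemma lshift_lrefl: "lshift (lrefl p) s = lrefl (lshift p (- s))"
  unfolding lshift_def lrefl_def by (simp add: algebra_simps)

lemma lrefl_lrefl[simp]: "lrefl (lrefl p) = p" unfolding lrefl_def by simp

lemma L_lshift_lrefl:
  assumes L: "lin_functional L" and symm: "\<forall>k::nat. L (mono (int k)) = L (mono (- int k))"
    and p: "in_span a b p"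
  shows "L (lshift (lrefl p) s) = L (lshift p (- s))"
  unfolding lshift_lrefl by (rule L_lrefl[OF L symm in_span_lshift[OF p]])

lemma leval_lrefl: "leval (lrefl p) z = leval p (1 / z)"
  unfolding leval_def lrefl_def
  by (rule sum.reindex_bij_witness[of _ uminus uminus])
     (auto simp: power_int_minus power_int_inverse divide_inverse)

lemma lrefl_mono0[simp]: "lrefl (mono 0) = mono 0" unfolding lrefl_def mono_def by auto



lemma Trows_Suc: "Trows (Suc r) n m = Trows r n m @ map (\<lambda>k. (r, k)) [- m r..n r - 1]"
  unfolding Trows_def by simp

lemma Trows_set: "set (Trows r n m) = {(j, k). j < r \<and> - m j \<le> k \<and> k \<le> n j - 1}"
  unfolding Trows_def by auto

lemma Trows_distinct: "distinct (Trows r n m)"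
proof (induction r)
  case 0 then show ?case by (simp add: Trows_def)
next
  case (Suc r)
  have "set (Trows r n m) \<inter> set (map (\<lambda>k. (r, k)) [- m r..n r - 1]) = {}"
    unfolding Trows_set by auto
  then show ?case using Suc by (simp add: Trows_Suc distinct_map inj_on_def)
qed

lemma Trows_length_int: "int (length (Trows r n m)) = (\<Sum>j<r. int (nat (n j + m j)))"
proof (induction r)
  case 0 then show ?case by (simp add: Trows_def)
next
  case (Suc r)
  then show ?case by (simp add: Trows_Suc)
qed

lemma Trows_length:
  assumes "inC r n m" shows "length (Trows r n m) = nat (vabs r n + vabs r m)"
proof -
  have "int (length (Trows r n m)) = (\<Sum>j<r. n j + m j)"
    unfolding Trows_length_int using assms unfolding inC_def by (intro sum.cong) auto
  also have "\<dots> = vabs r n + vabs r m" unfolding vabs_def by (simp add: sum.distrib)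
  finally show ?thesis by linarith
qed

lemma vabs_nonneg: "inC r n m \<Longrightarrow> vabs r n + vabs r m \<ge> 0"
proof -
  assume "inC r n m"
  have "vabs r n + vabs r m = (\<Sum>j<r. n j + m j)" unfolding vabs_def by (simp add: sum.distrib)
  also have "\<dots> \<ge> 0" using \<open>inC r n m\<close> unfolding inC_def by (intro sum_nonneg) auto
  finally show ?thesis by simp
qed

lemma Tmat_carrier: "Tmat r L n m \<in> carrier_mat (nat (vabs r n + vabs r m)) (nat (vabs r n + vabs r m))"
  unfolding Tmat_def Let_def by simp

lemma Tmat_index:
  assumes "a < nat (vabs r n + vabs r m)" "b < nat (vabs r n + vabs r m)"
  shows "Tmat r L n m $$ (a, b) = cmom L (snd (Trows r n m ! a) - (int b - vabs r m)) (fst (Trows r n m ! a))"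
  using assms unfolding Tmat_def Let_def by (simp add: case_prod_beta)

lemma Trows_nth:
  assumes "inC r n m" "a < nat (vabs r n + vabs r m)"
  shows "Trows r n m ! a \<in> {(j, k). j < r \<and> - m j \<le> k \<and> k \<le> n j - 1}"
proof -
  have "Trows r n m ! a \<in> set (Trows r n m)"
    using assms Trows_length[OF assms(1)] by (intro nth_mem) simp
  then show ?thesis unfolding Trows_set .
qed

lemma Trows_index:
  assumes "inC r n m" "j < r" "- m j \<le> k" "k \<le> n j - 1"
  shows "\<exists>a < nat (vabs r n + vabs r m). Trows r n m ! a = (j, k)"
proof -
  have "(j, k) \<in> set (Trows r n m)" using assms Trows_set by auto
  then obtain a where "a < length (Trows r n m)" "Trows r n m ! a = (j, k)"
    unfolding in_set_conv_nth by blast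
  then show ?thesis using Trows_length[OF assms(1)] by auto
qed

lemma Trows_sum:
  assumes "inC r n m"
  shows "(\<Sum>a < nat (vabs r n + vabs r m). f (Trows r n m ! a)) = (\<Sum>j<r. \<Sum>k\<in>{- m j..n j - 1}. f (j, k))"
proof -
  let ?N = "nat (vabs r n + vabs r m)"
  have "(\<Sum>a < ?N. f (Trows r n m ! a)) = (\<Sum>x\<in>set (Trows r n m). f x)"
    using Trows_distinct[of r n m] Trows_length[OF assms]
  proof -
    have "(\<Sum>x\<in>set (Trows r n m). f x) = sum_list (map f (Trows r n m))"
      by (rule sum.distinct_set_conv_list[OF Trows_distinct])
    also have "\<dots> = (\<Sum>a = 0..<length (Trows r n m). f (Trows r n m ! a))"
      by (simp add: sum_list_sum_nth)
    finally show ?thesis using Trows_length[OF assms] by (simp add: atLeast0LessThan)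
  qed
  also have "set (Trows r n m) = Sigma {..<r} (\<lambda>j. {- m j..n j - 1})"
    unfolding Trows_set by auto
  also have "(\<Sum>x\<in>Sigma {..<r} (\<lambda>j. {- m j..n j - 1}). f x) = (\<Sum>j<r. \<Sum>k\<in>{- m j..n j - 1}. f (j, k))"
    by (subst sum.Sigma) auto
  finally show ?thesis .
qed

lemma cmom_symm:
  assumes "\<forall>j<r. \<forall>k::nat. L j (mono (int k)) = L j (mono (- int k))" "j < r"
  shows "cmom L (- s) j = cmom L s j"
  unfolding cmom_def using mono_symm[of "L j" s] assms by simp



lemma mv_index:
  assumes "A \<in> carrier_mat N N" "a < N"
  shows "(A *\<^sub>v vec N x) $ a = (\<Sum>c<N. A $$ (a, c) * x c)"
  using assms by (simp add: scalar_prod_def atLeast0LessThan)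

lemma mat_inverse_exists:
  fixes A :: "complex mat"
  assumes A: "A \<in> carrier_mat N N" and d: "det A \<noteq> 0"
  shows "\<exists>B. B \<in> carrier_mat N N \<and> B * A = 1\<^sub>m N \<and> A * B = 1\<^sub>m N"
  using det_non_zero_imp_unit[OF A d, of undefined]
  unfolding Units_def ring_mat_simps by auto

lemma lin_solve:
  fixes A :: "complex mat"
  assumes A: "A \<in> carrier_mat N N" and d: "det A \<noteq> 0"
  shows "\<exists>!x. (\<forall>i. N \<le> i \<longrightarrow> x i = 0) \<and> (\<forall>a<N. (\<Sum>c<N. A $$ (a, c) * x c) = bb a)"
proof -
  obtain B where B: "B \<in> carrier_mat N N" "B * A = 1\<^sub>m N" "A * B = 1\<^sub>m N"
    using mat_inverse_exists[OF A d] by blast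
  define bv where "bv = vec N bb"
  have bv: "bv \<in> carrier_vec N" unfolding bv_def by simp
  define x0 where "x0 = (\<lambda>c. if c < N then (B *\<^sub>v bv) $ c else 0)"
  have vx0: "vec N x0 = B *\<^sub>v bv"
    using B(1) unfolding x0_def by (intro eq_vecI) auto
  have sol: "(\<forall>i. N \<le> i \<longrightarrow> x i = 0) \<and> (\<forall>a<N. (\<Sum>c<N. A $$ (a, c) * x c) = bb a)
      \<longleftrightarrow> x = x0" for x
  proof
    assume h: "(\<forall>i. N \<le> i \<longrightarrow> x i = 0) \<and> (\<forall>a<N. (\<Sum>c<N. A $$ (a, c) * x c) = bb a)"
    have "A *\<^sub>v vec N x = bv"
    proof (rule eq_vecI)
      fix i assume "i < dim_vec bv"
      then have i: "i < N" unfolding bv_def by simp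
      have "(A *\<^sub>v vec N x) $ i = (\<Sum>c<N. A $$ (a, c) * x c)" if "a = i" for a
        using mv_index[OF A i] that by simp
      then show "(A *\<^sub>v vec N x) $ i = bv $ i" using h i unfolding bv_def by simp
    qed (use A in \<open>simp add: bv_def\<close>)
    then have "B *\<^sub>v (A *\<^sub>v vec N x) = B *\<^sub>v bv" by simp
    also have "B *\<^sub>v (A *\<^sub>v vec N x) = vec N x"
      using B A by (simp flip: assoc_mult_mat_vec[OF B(1) A, of "vec N x"])
    finally have "vec N x = vec N x0" using vx0 by simp
    then show "x = x0"
    proof -
      assume e: "vec N x = vec N x0"
      show ?thesis
      proof
        fix c show "x c = x0 c"
        proof (cases "c < N")
          case True
          then have "vec N x $ c = vec N x0 $ c" using e by simp
          then show ?thesis using True by simp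
        next
          case False then show ?thesis using h unfolding x0_def by auto
        qed
      qed
    qed
  next
    assume "x = x0"
    then have hx: "vec N x = B *\<^sub>v bv" using vx0 by simp
    have "A *\<^sub>v vec N x = bv"
      unfolding hx using A B bv by (simp flip: assoc_mult_mat_vec[OF A B(1) bv])
    then have "(A *\<^sub>v vec N x) $ a = bb a" if "a < N" for a
      using that unfolding bv_def by simp
    then have "(\<Sum>c<N. A $$ (a, c) * x c) = bb a" if "a < N" for a
      using mv_index[OF A that, of x] that by simp
    then show "(\<forall>i. N \<le> i \<longrightarrow> x i = 0) \<and> (\<forall>a<N. (\<Sum>c<N. A $$ (a, c) * x c) = bb a)"
      using \<open>x = x0\<close> unfolding x0_def by auto
  qed
  show ?thesis unfolding sol by blast
qed

lemma lin_solve_T: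
  fixes A :: "complex mat"
  assumes A: "A \<in> carrier_mat N N" and d: "det A \<noteq> 0"
  shows "\<exists>!x. (\<forall>i. N \<le> i \<longrightarrow> x i = 0) \<and> (\<forall>a<N. (\<Sum>c<N. A $$ (c, a) * x c) = bb a)"
proof -
  have At: "transpose_mat A \<in> carrier_mat N N" using A by simp
  have dt: "det (transpose_mat A) \<noteq> 0" using det_transpose[OF A] d by simp
  have e: "(\<forall>a<N. (\<Sum>c<N. A $$ (c, a) * x c) = bb a) \<longleftrightarrow>
           (\<forall>a<N. (\<Sum>c<N. transpose_mat A $$ (a, c) * x c) = bb a)" for x
    using A by auto
  show ?thesis unfolding e by (rule lin_solve[OF At dt])
qed



definition PhiP :: "nat \<Rightarrow> (nat \<Rightarrow> lpoly \<Rightarrow> complex) \<Rightarrow> (nat \<Rightarrow> int) \<Rightarrow> (nat \<Rightarrow> int) \<Rightarrow> lpoly \<Rightarrow> bool" where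
  "PhiP r L n m p \<longleftrightarrow> in_span (- vabs r m) (vabs r n) p \<and> p (vabs r n) = 1 \<and>
        (\<forall>j<r. \<forall>k. - m j \<le> k \<and> k \<le> n j - 1 \<longrightarrow> L j (lshift p (- k)) = 0)"

definition xof :: "int \<Rightarrow> nat \<Rightarrow> lpoly \<Rightarrow> nat \<Rightarrow> complex" where
  "xof M N p = (\<lambda>c. if c < N then p (int c - M) else 0)"

definition pof :: "int \<Rightarrow> int \<Rightarrow> (nat \<Rightarrow> complex) \<Rightarrow> lpoly" where
  "pof M Nn x = (\<lambda>i. if i = Nn then 1 else if - M \<le> i \<and> i < Nn then x (nat (i + M)) else 0)"

lemma key_sum:
  assumes L: "lin_functional L" and p: "in_span (- M) Nn p" and MN: "- M \<le> Nn"
  shows "L (lshift p (- k)) = (\<Sum>c < nat (Nn + M). L (mono (int c - M - k)) * p (int c - M)) + p Nn * L (mono (Nn - k))"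
proof -
  have "L (lshift p (- k)) = (\<Sum>i\<in>{- M..Nn}. p i * L (mono (i + - k)))"
    by (rule L_lshift[OF L p])
  also have "{- M..Nn} = insert Nn {- M..<Nn}" using MN by auto
  also have "(\<Sum>i\<in>insert Nn {- M..<Nn}. p i * L (mono (i + - k))) =
      p Nn * L (mono (Nn - k)) + (\<Sum>i\<in>{- M..<Nn}. p i * L (mono (i + - k)))"
    by (simp add: sum.insert)
  also have "(\<Sum>i\<in>{- M..<Nn}. p i * L (mono (i + - k))) = (\<Sum>c < nat (Nn + M). L (mono (int c - M - k)) * p (int c - M))"
    by (rule sum.reindex_bij_witness[of _ "\<lambda>c. int c - M" "\<lambda>i. nat (i + M)"]) auto
  finally show ?thesis by simp
qed

lemma Trows_fst:
  assumes C: "inC r n m" and a: "a < nat (vabs r n + vabs r m)"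
  shows "fst (Trows r n m ! a) < r"
proof -
  obtain j k where e: "Trows r n m ! a = (j, k)" by (cases "Trows r n m ! a")
  have "(j, k) \<in> {(j, k). j < r \<and> - m j \<le> k \<and> k \<le> n j - 1}"
    using Trows_nth[OF C a] unfolding e .
  then show ?thesis unfolding e by simp
qed

lemma Trows_all:
  assumes C: "inC r n m"
  shows "(\<forall>j<r. \<forall>k. - m j \<le> k \<and> k \<le> n j - 1 \<longrightarrow> Q j k) \<longleftrightarrow>
    (\<forall>a<nat (vabs r n + vabs r m). Q (fst (Trows r n m ! a)) (snd (Trows r n m ! a)))"
proof
  assume h: "\<forall>j<r. \<forall>k. - m j \<le> k \<and> k \<le> n j - 1 \<longrightarrow> Q j k"
  show "\<forall>a<nat (vabs r n + vabs r m). Q (fst (Trows r n m ! a)) (snd (Trows r n m ! a))"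
  proof (intro allI impI)
    fix a assume a: "a < nat (vabs r n + vabs r m)"
    obtain j k where e: "Trows r n m ! a = (j, k)" by (cases "Trows r n m ! a")
    have "(j, k) \<in> {(j, k). j < r \<and> - m j \<le> k \<and> k \<le> n j - 1}"
      using Trows_nth[OF C a] unfolding e .
    then have "j < r" "- m j \<le> k \<and> k \<le> n j - 1" by simp_all
    then have "Q j k" using h by blast
    then show "Q (fst (Trows r n m ! a)) (snd (Trows r n m ! a))" unfolding e by simp
  qed
next
  assume h: "\<forall>a<nat (vabs r n + vabs r m). Q (fst (Trows r n m ! a)) (snd (Trows r n m ! a))"
  show "\<forall>j<r. \<forall>k. - m j \<le> k \<and> k \<le> n j - 1 \<longrightarrow> Q j k"
  proof (intro allI impI)
    fix j k assume "j < r" "- m j \<le> k \<and> k \<le> n j - 1"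
    then obtain a where a: "a < nat (vabs r n + vabs r m)" "Trows r n m ! a = (j, k)"
      using Trows_index[OF C] by blast
    have "Q (fst (Trows r n m ! a)) (snd (Trows r n m ! a))" using h a(1) by blast
    then show "Q j k" unfolding a(2) by simp
  qed
qed

lemma Phi_ex1:
  assumes lin: "\<forall>j<r. lin_functional (L j)" and C: "inC r n m"
    and d: "det (Tmat r L n m) \<noteq> 0"
  shows "\<exists>!p. PhiP r L n m p"
proof -
  define M where "M = vabs r m"
  define Nn where "Nn = vabs r n"
  define N where "N = nat (Nn + M)"
  have MN: "- M \<le> Nn" using vabs_nonneg[OF C] unfolding M_def Nn_def by simp
  have A: "Tmat r L n m \<in> carrier_mat N N" unfolding N_def M_def Nn_def by (rule Tmat_carrier)
  define bb where "bb = (\<lambda>a. - L (fst (Trows r n m ! a)) (mono (Nn - snd (Trows r n m ! a))))"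
  have T: "Tmat r L n m $$ (a, c) = L (fst (Trows r n m ! a)) (mono (int c - M - snd (Trows r n m ! a)))"
    if "a < N" "c < N" for a c
    using Tmat_index[of a r n m c L] that unfolding N_def M_def Nn_def cmom_def by simp
  have ks: "L j (lshift p (- k)) = (\<Sum>c<N. Tmat r L n m $$ (a, c) * xof M N p c) + p Nn * L j (mono (Nn - k))"
    if p: "in_span (- M) Nn p" and a: "a < N" and ra: "Trows r n m ! a = (j, k)" and j: "j < r" for p a j k
  proof -
    have "L j (lshift p (- k)) = (\<Sum>c<N. L j (mono (int c - M - k)) * p (int c - M)) + p Nn * L j (mono (Nn - k))"
      unfolding N_def by (rule key_sum[OF _ p MN]) (use lin j in auto)
    also have "(\<Sum>c<N. L j (mono (int c - M - k)) * p (int c - M)) = (\<Sum>c<N. Tmat r L n m $$ (a, c) * xof M N p c)"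
      by (rule sum.cong) (auto simp: T[OF a] ra xof_def)
    finally show ?thesis .
  qed
  have rows: "(\<forall>j<r. \<forall>k. - m j \<le> k \<and> k \<le> n j - 1 \<longrightarrow> Q j k) \<longleftrightarrow> (\<forall>a<N. Q (fst (Trows r n m ! a)) (snd (Trows r n m ! a)))" for Q
    unfolding N_def M_def Nn_def by (rule Trows_all[OF C])
  have jr: "fst (Trows r n m ! a) < r" if "a < N" for a
    using that unfolding N_def M_def Nn_def by (rule Trows_fst[OF C])
  have sys: "PhiP r L n m p \<longleftrightarrow> in_span (- M) Nn p \<and> p Nn = 1 \<and>
      (\<forall>a<N. (\<Sum>c<N. Tmat r L n m $$ (a, c) * xof M N p c) = bb a)" for p
  proof -
    have "PhiP r L n m p \<longleftrightarrow> in_span (- M) Nn p \<and> p Nn = 1 \<and>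
      (\<forall>a<N. L (fst (Trows r n m ! a)) (lshift p (- snd (Trows r n m ! a))) = 0)"
      unfolding PhiP_def rows[of "\<lambda>j k. L j (lshift p (- k)) = 0"] M_def Nn_def by simp
    also have "\<dots> \<longleftrightarrow> in_span (- M) Nn p \<and> p Nn = 1 \<and>
      (\<forall>a<N. (\<Sum>c<N. Tmat r L n m $$ (a, c) * xof M N p c) = bb a)"
    proof -
      have eq: "(L (fst (Trows r n m ! a)) (lshift p (- snd (Trows r n m ! a))) = 0) \<longleftrightarrow>
            ((\<Sum>c<N. Tmat r L n m $$ (a, c) * xof M N p c) = bb a)"
        if p: "in_span (- M) Nn p" and p1: "p Nn = 1" and a: "a < N" for a
      proof -
        have "L (fst (Trows r n m ! a)) (lshift p (- snd (Trows r n m ! a))) =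
           (\<Sum>c<N. Tmat r L n m $$ (a, c) * xof M N p c) - bb a"
          using ks[OF p a _ jr[OF a], of "snd (Trows r n m ! a)"] p1 unfolding bb_def by simp
        then show ?thesis by simp
      qed
      show ?thesis using eq by blast
    qed
    finally show ?thesis .
  qed
  define Q where "Q = (\<lambda>y. (\<forall>i. N \<le> i \<longrightarrow> y i = 0) \<and> (\<forall>a<N. (\<Sum>c<N. Tmat r L n m $$ (a, c) * y c) = bb a))"
  have exQ: "\<exists>!y. Q y" unfolding Q_def by (rule lin_solve[OF A d])
  define x0 where "x0 = (THE y. Q y)"
  have x0Q: "Q x0" unfolding x0_def by (rule theI'[OF exQ])
  have x0: "(\<forall>i. N \<le> i \<longrightarrow> x0 i = 0) \<and> (\<forall>a<N. (\<Sum>c<N. Tmat r L n m $$ (a, c) * x0 c) = bb a)"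
    using x0Q unfolding Q_def .
  have x0u: "y = x0" if "(\<forall>i. N \<le> i \<longrightarrow> y i = 0) \<and> (\<forall>a<N. (\<Sum>c<N. Tmat r L n m $$ (a, c) * y c) = bb a)" for y
  proof -
    have "Q y" unfolding Q_def by (rule that)
    then show ?thesis unfolding x0_def by (rule the1_equality[OF exQ, symmetric])
  qed
  have xp: "xof M N (pof M Nn x) = x" if x: "\<forall>i. N \<le> i \<longrightarrow> x i = 0" for x
  proof
    fix c show "xof M N (pof M Nn x) c = x c"
    proof (cases "c < N")
      case True
      then have c1: "int c - M \<noteq> Nn" "- M \<le> int c - M" "int c - M < Nn" "nat (int c - M + M) = c"
        unfolding N_def by linarith+
      show ?thesis unfolding xof_def pof_def using True c1 by simp
    next
      case False then show ?thesis unfolding xof_def using x by simp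
    qed
  qed
  have px: "pof M Nn (xof M N p) = p" if p: "in_span (- M) Nn p" and p1: "p Nn = 1" for p
  proof
    fix i show "pof M Nn (xof M N p) i = p i"
    proof (cases "i = Nn")
      case True then show ?thesis unfolding pof_def using p1 by simp
    next
      case ne: False
      show ?thesis
      proof (cases "- M \<le> i \<and> i < Nn")
        case True
        then have "nat (i + M) < N" "int (nat (i + M)) - M = i" unfolding N_def by linarith+
        then show ?thesis unfolding pof_def xof_def using ne True by simp
      next
        case False
        then have "p i = 0" using p ne unfolding in_span_def by force
        then show ?thesis unfolding pof_def using ne False by auto
      qed
    qed
  qed
  have xz: "\<forall>i. N \<le> i \<longrightarrow> xof M N p i = 0" for p unfolding xof_def by auto
  have sp: "in_span (- M) Nn (pof M Nn x)" for x
    unfolding in_span_def pof_def using MN by auto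
  have e1: "xof M N (pof M Nn x0) = x0" by (rule xp) (use x0 in blast)
  have e2: "pof M Nn x0 Nn = 1" unfolding pof_def by simp
  have ex: "PhiP r L n m (pof M Nn x0)"
  proof -
    have "in_span (- M) Nn (pof M Nn x0) \<and> pof M Nn x0 Nn = 1 \<and>
      (\<forall>a<N. (\<Sum>c<N. Tmat r L n m $$ (a, c) * xof M N (pof M Nn x0) c) = bb a)"
      unfolding e1 using sp[of x0] e2 x0 by simp
    then show ?thesis using sys by simp
  qed
  have un: "p = pof M Nn x0" if "PhiP r L n m p" for p
  proof -
    have s3: "in_span (- M) Nn p \<and> p Nn = 1 \<and> (\<forall>a<N. (\<Sum>c<N. Tmat r L n m $$ (a, c) * xof M N p c) = bb a)"
      using that sys by simp
    have "xof M N p = x0" by (rule x0u) (use xz[of p] s3 in simp)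
    moreover have "pof M Nn (xof M N p) = p" by (rule px) (use s3 in simp_all)
    ultimately show ?thesis by simp
  qed
  show ?thesis
  proof (rule ex1I[of _ "pof M Nn x0"])
    show "PhiP r L n m (pof M Nn x0)" by (rule ex)
  next
    fix p assume "PhiP r L n m p" then show "p = pof M Nn x0" by (rule un)
  qed
qed



definition XiP :: "nat \<Rightarrow> (nat \<Rightarrow> lpoly \<Rightarrow> complex) \<Rightarrow> (nat \<Rightarrow> int) \<Rightarrow> (nat \<Rightarrow> int) \<Rightarrow> (nat \<Rightarrow> lpoly) \<Rightarrow> bool" where
  "XiP r L n m X \<longleftrightarrow> (\<forall>j. r \<le> j \<longrightarrow> X j = (\<lambda>i. 0)) \<and>
        (\<forall>j<r. in_span (- n j) (m j - 1) (X j)) \<and>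
        (\<forall>k. - vabs r n + 1 \<le> k \<and> k \<le> vabs r m - 1 \<longrightarrow>
              (\<Sum>j<r. L j (lshift (X j) (- k))) = 0) \<and>
        (\<Sum>j<r. L j (lshift (X j) (vabs r n))) = 1"

definition yof :: "nat \<Rightarrow> (nat \<Rightarrow> int) \<Rightarrow> (nat \<Rightarrow> int) \<Rightarrow> (nat \<Rightarrow> lpoly) \<Rightarrow> nat \<Rightarrow> complex" where
  "yof r n m X = (\<lambda>a. if a < nat (vabs r n + vabs r m)
      then X (fst (Trows r n m ! a)) (- snd (Trows r n m ! a) - 1) else 0)"

definition Xof :: "nat \<Rightarrow> (nat \<Rightarrow> int) \<Rightarrow> (nat \<Rightarrow> int) \<Rightarrow> (nat \<Rightarrow> complex) \<Rightarrow> nat \<Rightarrow> lpoly" where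
  "Xof r n m y = (\<lambda>j t. if j < r \<and> - n j \<le> t \<and> t \<le> m j - 1
      then (\<Sum>a < nat (vabs r n + vabs r m). if Trows r n m ! a = (j, - t - 1) then y a else 0) else 0)"

lemma not_antidiag_pos:
  assumes C: "inC r n m" and na: "\<not> antidiag r n m"
  shows "vabs r n + vabs r m > 0"
proof -
  obtain j where j: "j < r" "n j \<noteq> - m j" using na unfolding antidiag_def by blast
  have "vabs r n + vabs r m = (\<Sum>i<r. n i + m i)" unfolding vabs_def by (simp add: sum.distrib)
  also have "\<dots> \<ge> n j + m j"
    by (rule member_le_sum) (use C j in \<open>auto simp: inC_def\<close>)
  finally show ?thesis using C j unfolding inC_def by force
qed

lemma Trows_delta:
  assumes C: "inC r n m" and a: "a < nat (vabs r n + vabs r m)"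
  shows "(\<Sum>a' < nat (vabs r n + vabs r m). if Trows r n m ! a' = Trows r n m ! a then y a' else 0) = y a"
proof -
  have "(\<Sum>a' < nat (vabs r n + vabs r m). if Trows r n m ! a' = Trows r n m ! a then y a' else 0) =
        (\<Sum>a' < nat (vabs r n + vabs r m). if a' = a then y a' else 0)"
  proof (rule sum.cong[OF refl])
    fix a' assume "a' \<in> {..<nat (vabs r n + vabs r m)}"
    then have "(Trows r n m ! a' = Trows r n m ! a) = (a' = a)"
      using a Trows_distinct[of r n m] Trows_length[OF C] by (simp add: nth_eq_iff_index_eq)
    then show "(if Trows r n m ! a' = Trows r n m ! a then y a' else 0) = (if a' = a then y a' else 0)"
      by simp
  qed
  also have "\<dots> = y a" using a by (simp add: sum.delta')
  finally show ?thesis .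
qed

lemma Xi_ex1:
  assumes lin: "\<forall>j<r. lin_functional (L j)" and C: "inC r n m" and na: "\<not> antidiag r n m"
    and d: "det (Tmat r L n m) \<noteq> 0"
  shows "\<exists>!X. XiP r L n m X"
proof -
  define M where "M = vabs r m"
  define Nn where "Nn = vabs r n"
  define N where "N = nat (Nn + M)"
  have pos: "Nn + M > 0" using not_antidiag_pos[OF C na] unfolding M_def Nn_def by simp
  have A: "Tmat r L n m \<in> carrier_mat N N" unfolding N_def M_def Nn_def by (rule Tmat_carrier)
  have T: "Tmat r L n m $$ (a, c) = L (fst (Trows r n m ! a)) (mono (int c - M - snd (Trows r n m ! a)))"
    if "a < N" "c < N" for a c
    using Tmat_index[of a r n m c L] that unfolding N_def M_def Nn_def cmom_def by simp
  define S where "S = (\<lambda>X k. \<Sum>j<r. L j (lshift (X j) (- k)))"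
  define bb where "bb = (\<lambda>c. if c = N - 1 then 1 else (0::complex))"
  have key: "S X (M - 1 - int c) = (\<Sum>a<N. Tmat r L n m $$ (a, c) * yof r n m X a)"
    if sp: "\<forall>j<r. in_span (- n j) (m j - 1) (X j)" and c: "c < N" for X c
  proof -
    define k where "k = M - 1 - int c"
    have "S X k = (\<Sum>j<r. \<Sum>t\<in>{- n j..m j - 1}. X j t * L j (mono (t + - k)))"
      unfolding S_def
    proof (rule sum.cong[OF refl])
      fix j assume "j \<in> {..<r}"
      then show "L j (lshift (X j) (- k)) = (\<Sum>t\<in>{- n j..m j - 1}. X j t * L j (mono (t + - k)))"
        using L_lshift[of "L j" "- n j" "m j - 1" "X j" "- k"] lin sp by simp
    qed
    also have "\<dots> = (\<Sum>j<r. \<Sum>k'\<in>{- m j..n j - 1}. L j (mono (- k' - 1 - k)) * X j (- k' - 1))"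
    proof (rule sum.cong[OF refl])
      fix j
      show "(\<Sum>t\<in>{- n j..m j - 1}. X j t * L j (mono (t + - k))) =
            (\<Sum>k'\<in>{- m j..n j - 1}. L j (mono (- k' - 1 - k)) * X j (- k' - 1))"
        by (rule sum.reindex_bij_witness[of _ "\<lambda>k'. - k' - 1" "\<lambda>t. - t - 1"]) (auto simp: algebra_simps)
    qed
    also have "\<dots> = (\<Sum>a<N. (\<lambda>(j, k'). L j (mono (- k' - 1 - k)) * X j (- k' - 1)) (Trows r n m ! a))"
      unfolding N_def M_def Nn_def
      using Trows_sum[OF C, of "\<lambda>(j, k'). L j (mono (- k' - 1 - k)) * X j (- k' - 1)"] by simp
    also have "\<dots> = (\<Sum>a<N. Tmat r L n m $$ (a, c) * yof r n m X a)"
    proof (rule sum.cong[OF refl])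
      fix a assume "a \<in> {..<N}"
      then have a: "a < N" by simp
      obtain j k' where e: "Trows r n m ! a = (j, k')" by (cases "Trows r n m ! a")
      have h: "int c - M - k' = - k' - 1 - k" unfolding k_def by simp
      show "(\<lambda>(j, k'). L j (mono (- k' - 1 - k)) * X j (- k' - 1)) (Trows r n m ! a) =
          Tmat r L n m $$ (a, c) * yof r n m X a"
        unfolding T[OF a c] yof_def e snd_conv fst_conv h using a unfolding N_def M_def Nn_def by simp
    qed
    finally show ?thesis unfolding k_def .
  qed
  have conds: "((\<forall>k. - Nn + 1 \<le> k \<and> k \<le> M - 1 \<longrightarrow> S X k = 0) \<and> S X (- Nn) = 1) \<longleftrightarrow>
      (\<forall>c<N. S X (M - 1 - int c) = bb c)" for X
  proof
    assume h: "(\<forall>k. - Nn + 1 \<le> k \<and> k \<le> M - 1 \<longrightarrow> S X k = 0) \<and> S X (- Nn) = 1"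
    show "\<forall>c<N. S X (M - 1 - int c) = bb c"
    proof (intro allI impI)
      fix c assume c: "c < N"
      show "S X (M - 1 - int c) = bb c"
      proof (cases "c = N - 1")
        case True
        then have "M - 1 - int c = - Nn" using pos unfolding N_def by linarith
        then show ?thesis using h True unfolding bb_def by simp
      next
        case False
        then have "- Nn + 1 \<le> M - 1 - int c \<and> M - 1 - int c \<le> M - 1" using c pos unfolding N_def by linarith
        then show ?thesis using h False unfolding bb_def by simp
      qed
    qed
  next
    assume h: "\<forall>c<N. S X (M - 1 - int c) = bb c"
    have 1: "S X (- Nn) = 1"
    proof -
      have "N - 1 < N" "M - 1 - int (N - 1) = - Nn" using pos unfolding N_def by linarith+
      then show ?thesis using h unfolding bb_def by force
    qed
    have 2: "S X k = 0" if k: "- Nn + 1 \<le> k \<and> k \<le> M - 1" for k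
    proof -
      define c where "c = nat (M - 1 - k)"
      have "c < N" "M - 1 - int c = k" "c \<noteq> N - 1" using k pos unfolding c_def N_def by linarith+
      then show ?thesis using h unfolding bb_def by force
    qed
    show "(\<forall>k. - Nn + 1 \<le> k \<and> k \<le> M - 1 \<longrightarrow> S X k = 0) \<and> S X (- Nn) = 1"
      using 1 2 by blast
  qed
  have sys: "XiP r L n m X \<longleftrightarrow> (\<forall>j. r \<le> j \<longrightarrow> X j = (\<lambda>i. 0)) \<and> (\<forall>j<r. in_span (- n j) (m j - 1) (X j)) \<and>
      (\<forall>c<N. (\<Sum>a<N. Tmat r L n m $$ (a, c) * yof r n m X a) = bb c)" for X
  proof -
    have "XiP r L n m X \<longleftrightarrow> (\<forall>j. r \<le> j \<longrightarrow> X j = (\<lambda>i. 0)) \<and> (\<forall>j<r. in_span (- n j) (m j - 1) (X j)) \<and>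
      ((\<forall>k. - Nn + 1 \<le> k \<and> k \<le> M - 1 \<longrightarrow> S X k = 0) \<and> S X (- Nn) = 1)"
      unfolding XiP_def S_def M_def Nn_def by simp
    also have "\<dots> \<longleftrightarrow> (\<forall>j. r \<le> j \<longrightarrow> X j = (\<lambda>i. 0)) \<and> (\<forall>j<r. in_span (- n j) (m j - 1) (X j)) \<and>
      (\<forall>c<N. S X (M - 1 - int c) = bb c)"
      unfolding conds ..
    also have "\<dots> \<longleftrightarrow> (\<forall>j. r \<le> j \<longrightarrow> X j = (\<lambda>i. 0)) \<and> (\<forall>j<r. in_span (- n j) (m j - 1) (X j)) \<and>
      (\<forall>c<N. (\<Sum>a<N. Tmat r L n m $$ (a, c) * yof r n m X a) = bb c)"
    proof -
      have "(\<forall>c<N. S X (M - 1 - int c) = bb c) \<longleftrightarrow> (\<forall>c<N. (\<Sum>a<N. Tmat r L n m $$ (a, c) * yof r n m X a) = bb c)"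
        if "\<forall>j<r. in_span (- n j) (m j - 1) (X j)"
        using key[OF that] by simp
      then show ?thesis by blast
    qed
    finally show ?thesis .
  qed
  define Q where "Q = (\<lambda>y. (\<forall>i. N \<le> i \<longrightarrow> y i = 0) \<and> (\<forall>c<N. (\<Sum>a<N. Tmat r L n m $$ (a, c) * y a) = bb c))"
  have exQ: "\<exists>!y. Q y" unfolding Q_def by (rule lin_solve_T[OF A d])
  define y0 where "y0 = (THE y. Q y)"
  have y0Q: "Q y0" unfolding y0_def by (rule theI'[OF exQ])
  have y0u: "y = y0" if "Q y" for y
    using that unfolding y0_def by (rule the1_equality[OF exQ, symmetric])
  have yX: "yof r n m (Xof r n m y) = y" if y: "\<forall>i. N \<le> i \<longrightarrow> y i = 0" for y
  proof
    fix a show "yof r n m (Xof r n m y) a = y a"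
    proof (cases "a < N")
      case True
      obtain j k where e: "Trows r n m ! a = (j, k)" by (cases "Trows r n m ! a")
      have "(j, k) \<in> {(j, k). j < r \<and> - m j \<le> k \<and> k \<le> n j - 1}"
        using Trows_nth[OF C, of a] True unfolding e N_def M_def Nn_def by simp
      then have jk: "j < r \<and> - n j \<le> - k - 1 \<and> - k - 1 \<le> m j - 1" by auto
      have "yof r n m (Xof r n m y) a =
          (\<Sum>a' < nat (vabs r n + vabs r m). if Trows r n m ! a' = Trows r n m ! a then y a' else 0)"
        unfolding yof_def Xof_def e using True jk unfolding N_def M_def Nn_def by simp
      also have "\<dots> = y a" by (rule Trows_delta[OF C]) (use True in \<open>simp add: N_def M_def Nn_def\<close>)
      finally show ?thesis .
    next
      case False then show ?thesis unfolding yof_def using y unfolding N_def M_def Nn_def by simp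
    qed
  qed
  have Xy: "Xof r n m (yof r n m X) = X" if z: "\<forall>j. r \<le> j \<longrightarrow> X j = (\<lambda>i. 0)"
    and sp: "\<forall>j<r. in_span (- n j) (m j - 1) (X j)" for X
  proof (intro ext)
    fix j t show "Xof r n m (yof r n m X) j t = X j t"
    proof (cases "j < r \<and> - n j \<le> t \<and> t \<le> m j - 1")
      case True
      then obtain a where a: "a < N" "Trows r n m ! a = (j, - t - 1)"
        using Trows_index[OF C, of j "- t - 1"] unfolding N_def M_def Nn_def by auto
      have "Xof r n m (yof r n m X) j t =
          (\<Sum>a' < nat (vabs r n + vabs r m). if Trows r n m ! a' = Trows r n m ! a then yof r n m X a' else 0)"
        unfolding Xof_def a(2) using True by simp
      also have "\<dots> = yof r n m X a" by (rule Trows_delta[OF C]) (use a in \<open>simp add: N_def M_def Nn_def\<close>)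
      also have "\<dots> = X j t" unfolding yof_def a(2) using a(1) unfolding N_def M_def Nn_def by simp
      finally show ?thesis .
    next
      case False
      have "X j t = 0"
      proof (cases "j < r")
        case True
        then have "in_span (- n j) (m j - 1) (X j)" using sp by blast
        then show ?thesis using False True unfolding in_span_def by force
      next
        case False then show ?thesis using z by simp
      qed
      moreover have "Xof r n m (yof r n m X) j t = 0"
        unfolding Xof_def by (rule if_not_P[OF False])
      ultimately show ?thesis by simp
    qed
  qed
  have Xz: "\<forall>j. r \<le> j \<longrightarrow> Xof r n m y j = (\<lambda>i. 0)" for y unfolding Xof_def by simp
  have Xsp: "\<forall>j<r. in_span (- n j) (m j - 1) (Xof r n m y j)" for y unfolding Xof_def in_span_def by simp
  have yz: "\<forall>i. N \<le> i \<longrightarrow> yof r n m X i = 0" for X unfolding yof_def N_def M_def Nn_def by simp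
  have ex: "XiP r L n m (Xof r n m y0)"
  proof -
    have e: "yof r n m (Xof r n m y0) = y0" by (rule yX) (use y0Q in \<open>simp add: Q_def\<close>)
    have "\<forall>c<N. (\<Sum>a<N. Tmat r L n m $$ (a, c) * y0 a) = bb c" using y0Q unfolding Q_def by blast
    then show ?thesis unfolding sys e using Xz Xsp by blast
  qed
  have un: "X = Xof r n m y0" if "XiP r L n m X" for X
  proof -
    have s3: "(\<forall>j. r \<le> j \<longrightarrow> X j = (\<lambda>i. 0)) \<and> (\<forall>j<r. in_span (- n j) (m j - 1) (X j)) \<and>
      (\<forall>c<N. (\<Sum>a<N. Tmat r L n m $$ (a, c) * yof r n m X a) = bb c)" using that unfolding sys .
    have "Q (yof r n m X)" unfolding Q_def using yz[of X] s3 by blast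
    then have "yof r n m X = y0" by (rule y0u)
    moreover have "Xof r n m (yof r n m X) = X" by (rule Xy) (use s3 in blast)+
    ultimately show ?thesis by simp
  qed
  show ?thesis
  proof (rule ex1I[of _ "Xof r n m y0"])
    show "XiP r L n m (Xof r n m y0)" by (rule ex)
  next
    fix X assume "XiP r L n m X" then show "X = Xof r n m y0" by (rule un)
  qed
qed



lemma inC_swap: "inC r n m \<Longrightarrow> inC r m n" unfolding inC_def by (simp add: add.commute)
lemma antidiag_swap: "antidiag r n m \<longleftrightarrow> antidiag r m n" unfolding antidiag_def by auto

lemma det_swap_zero:
  assumes symm: "\<forall>j<r. \<forall>k::nat. L j (mono (int k)) = L j (mono (- int k))"
    and C: "inC r n m" and d: "det (Tmat r L m n) = 0"
  shows "det (Tmat r L n m) = 0"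
proof -
  define M where "M = vabs r m"
  define Nn where "Nn = vabs r n"
  define N where "N = nat (Nn + M)"
  have C': "inC r m n" by (rule inC_swap[OF C])
  have NN: "nat (vabs r m + vabs r n) = N" unfolding N_def M_def Nn_def by (simp add: add.commute)
  have nn: "Nn + M \<ge> 0" using vabs_nonneg[OF C] unfolding M_def Nn_def .
  have A: "Tmat r L n m \<in> carrier_mat N N" unfolding N_def M_def Nn_def by (rule Tmat_carrier)
  have A': "Tmat r L m n \<in> carrier_mat N N" using Tmat_carrier[of r L m n] unfolding NN .
  obtain v where v: "v \<in> carrier_vec N" "v \<noteq> 0\<^sub>v N" "Tmat r L m n *\<^sub>v v = 0\<^sub>v N"
    using d det_0_iff_vec_prod_zero[OF A'] by blast
  obtain i where i: "i < N" "v $ i \<noteq> 0"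
  proof -
    have "\<exists>i<N. v $ i \<noteq> 0"
    proof (rule ccontr)
      assume "\<not> (\<exists>i<N. v $ i \<noteq> 0)"
      then have "v = 0\<^sub>v N" using v(1) by (intro eq_vecI) auto
      then show False using v(2) by simp
    qed
    then show ?thesis using that by blast
  qed
  define w where "w = vec N (\<lambda>b. v $ (N - 1 - b))"
  have wc: "w \<in> carrier_vec N" unfolding w_def by simp
  have w0: "w \<noteq> 0\<^sub>v N"
  proof
    assume "w = 0\<^sub>v N"
    then have "w $ (N - 1 - i) = 0" using i by simp
    moreover have "w $ (N - 1 - i) = v $ i" unfolding w_def using i by simp
    ultimately show False using i by simp
  qed
  have Aw: "Tmat r L n m *\<^sub>v w = 0\<^sub>v N"
  proof (rule eq_vecI)
    fix a assume "a < dim_vec (0\<^sub>v N :: complex vec)"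
    then have a: "a < N" by simp
    obtain j k where e: "Trows r n m ! a = (j, k)" by (cases "Trows r n m ! a")
    have "(j, k) \<in> {(j, k). j < r \<and> - m j \<le> k \<and> k \<le> n j - 1}"
      using Trows_nth[OF C, of a] a unfolding e N_def M_def Nn_def by simp
    then have jk: "j < r" "- n j \<le> - k - 1" "- k - 1 \<le> m j - 1" by auto
    obtain a' where a': "a' < N" "Trows r m n ! a' = (j, - k - 1)"
      using Trows_index[OF C' jk] unfolding NN by blast
    have "(Tmat r L n m *\<^sub>v w) $ a = (\<Sum>b<N. Tmat r L n m $$ (a, b) * v $ (N - 1 - b))"
      unfolding w_def by (rule mv_index[OF A a])
    also have "\<dots> = (\<Sum>b<N. Tmat r L n m $$ (a, N - 1 - b) * v $ b)"
      by (rule sum.reindex_bij_witness[of _ "\<lambda>b. N - 1 - b" "\<lambda>b. N - 1 - b"]) auto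
    also have "\<dots> = (\<Sum>b<N. Tmat r L m n $$ (a', b) * v $ b)"
    proof (rule sum.cong[OF refl])
      fix b assume "b \<in> {..<N}"
      then have b: "b < N" by simp
      have e1: "Tmat r L n m $$ (a, N - 1 - b) = cmom L (k - (int (N - 1 - b) - M)) j"
        using Tmat_index[of a r n m "N - 1 - b" L] a b unfolding e N_def M_def Nn_def by simp
      have e2: "Tmat r L m n $$ (a', b) = cmom L ((- k - 1) - (int b - Nn)) j"
        using Tmat_index[of a' r m n b L] a'(1) b a'(2) unfolding NN Nn_def by simp
      have h: "(- k - 1) - (int b - Nn) = - (k - (int (N - 1 - b) - M))"
        using b nn unfolding N_def by linarith
      have "Tmat r L m n $$ (a', b) = Tmat r L n m $$ (a, N - 1 - b)"
        unfolding e1 e2 h by (rule cmom_symm[OF symm jk(1)])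
      then show "Tmat r L n m $$ (a, N - 1 - b) * v $ b = Tmat r L m n $$ (a', b) * v $ b" by simp
    qed
    also have "\<dots> = (Tmat r L m n *\<^sub>v vec N (\<lambda>b. v $ b)) $ a'"
      by (rule mv_index[OF A' a'(1), symmetric])
    also have "vec N (\<lambda>b. v $ b) = v" using v(1) by (intro eq_vecI) auto
    also have "(Tmat r L m n *\<^sub>v v) $ a' = 0" using v(3) a'(1) by simp
    finally show "(Tmat r L n m *\<^sub>v w) $ a = 0\<^sub>v N $ a" using a by simp
  qed (use A in simp)
  show ?thesis using det_0_iff_vec_prod_zero[OF A] wc w0 Aw by blast
qed

lemma normal_swap:
  assumes symm: "\<forall>j<r. \<forall>k::nat. L j (mono (int k)) = L j (mono (- int k))"
  shows "normal r L n m \<longleftrightarrow> normal r L m n"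
proof -
  have "det (Tmat r L n m) \<noteq> 0 \<longleftrightarrow> det (Tmat r L m n) \<noteq> 0" if C: "inC r n m"
    using det_swap_zero[OF symm C] det_swap_zero[OF symm inC_swap[OF C]] by blast
  then show ?thesis unfolding normal_def using inC_swap antidiag_swap by metis
qed



lemma Phi_THE: "\<not> antidiag r n m \<Longrightarrow> Phi r L n m = (THE p. PhiP r L n m p)"
  unfolding Phi_def PhiP_def by simp

lemma Phi_normal:
  assumes lin: "\<forall>j<r. lin_functional (L j)" and N: "normal r L n m" and na: "\<not> antidiag r n m"
  shows "PhiP r L n m (Phi r L n m)"
proof -
  have C: "inC r n m" and d: "det (Tmat r L n m) \<noteq> 0" using N na unfolding normal_def by auto
  show ?thesis unfolding Phi_THE[OF na] by (rule theI'[OF Phi_ex1[OF lin C d]])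
qed

lemma Phi_span:
  assumes lin: "\<forall>j<r. lin_functional (L j)" and N: "normal r L n m"
  shows "\<exists>a b. in_span a b (Phi r L n m)"
proof (cases "antidiag r n m")
  case True
  then have "Phi r L n m = mono 0" unfolding Phi_def by simp
  then have "in_span 0 0 (Phi r L n m)" unfolding in_span_def mono_def by simp
  then show ?thesis by blast
next
  case False
  then show ?thesis using Phi_normal[OF lin N False] unfolding PhiP_def by blast
qed

lemma in_span_lrefl_iff: "in_span a b (lrefl q) \<longleftrightarrow> in_span (- b) (- a) q"
proof
  assume "in_span a b (lrefl q)"
  then show "in_span (- b) (- a) q" using in_span_lrefl[of a b "lrefl q"] by simp
next
  assume "in_span (- b) (- a) q"
  then show "in_span a b (lrefl q)" using in_span_lrefl[of "- b" "- a" q] by simp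
qed

lemma Phistar_refl:
  assumes lin: "\<forall>j<r. lin_functional (L j)"
    and symm: "\<forall>j<r. \<forall>k::nat. L j (mono (int k)) = L j (mono (- int k))"
    and N: "normal r L a b"
  shows "Phistar r L b a = lrefl (Phi r L a b)"
proof (cases "antidiag r a b")
  case True
  then have "antidiag r b a" using antidiag_swap by blast
  then show ?thesis using True unfolding Phistar_def Phi_def by simp
next
  case False
  then have na': "\<not> antidiag r b a" using antidiag_swap by blast
  have C: "inC r a b" and d: "det (Tmat r L a b) \<noteq> 0" using N False unfolding normal_def by auto
  define PsP where "PsP = (\<lambda>p. in_span (- vabs r a) (vabs r b) p \<and> p (- vabs r a) = 1 \<and>
        (\<forall>j<r. \<forall>k. - a j + 1 \<le> k \<and> k \<le> b j \<longrightarrow> L j (lshift p (- k)) = 0))"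
  have PS: "Phistar r L b a = (THE p. PsP p)" unfolding Phistar_def PsP_def using na' by simp
  have eqv: "PsP q \<longleftrightarrow> PhiP r L a b (lrefl q)" for q
  proof -
    have "PsP q \<longleftrightarrow> in_span (- vabs r a) (vabs r b) q \<and> q (- vabs r a) = 1 \<and>
        (\<forall>j<r. \<forall>k. - b j \<le> k \<and> k \<le> a j - 1 \<longrightarrow> L j (lshift (lrefl q) (- k)) = 0)"
    proof -
      have "(\<forall>j<r. \<forall>k. - a j + 1 \<le> k \<and> k \<le> b j \<longrightarrow> L j (lshift q (- k)) = 0) \<longleftrightarrow>
            (\<forall>j<r. \<forall>k. - b j \<le> k \<and> k \<le> a j - 1 \<longrightarrow> L j (lshift (lrefl q) (- k)) = 0)"
        if sp: "in_span (- vabs r a) (vabs r b) q"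
      proof -
        have e: "L j (lshift (lrefl q) (- k)) = L j (lshift q (- (- k)))" if "j < r" for j k
          by (rule L_lshift_lrefl[OF _ _ sp]) (use lin symm that in auto)
        show ?thesis
        proof
          assume h: "\<forall>j<r. \<forall>k. - a j + 1 \<le> k \<and> k \<le> b j \<longrightarrow> L j (lshift q (- k)) = 0"
          show "\<forall>j<r. \<forall>k. - b j \<le> k \<and> k \<le> a j - 1 \<longrightarrow> L j (lshift (lrefl q) (- k)) = 0"
          proof (intro allI impI)
            fix j k assume j: "j < r" and k: "- b j \<le> k \<and> k \<le> a j - 1"
            have "- a j + 1 \<le> - k \<and> - k \<le> b j" using k by linarith
            then have "L j (lshift q (- (- k))) = 0" using h j by blast
            then show "L j (lshift (lrefl q) (- k)) = 0" using e[OF j] by simp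
          qed
        next
          assume h: "\<forall>j<r. \<forall>k. - b j \<le> k \<and> k \<le> a j - 1 \<longrightarrow> L j (lshift (lrefl q) (- k)) = 0"
          show "\<forall>j<r. \<forall>k. - a j + 1 \<le> k \<and> k \<le> b j \<longrightarrow> L j (lshift q (- k)) = 0"
          proof (intro allI impI)
            fix j k assume j: "j < r" and k: "- a j + 1 \<le> k \<and> k \<le> b j"
            have "- b j \<le> - k \<and> - k \<le> a j - 1" using k by linarith
            then have "L j (lshift (lrefl q) (- (- k))) = 0" using h j by blast
            then show "L j (lshift q (- k)) = 0" using e[OF j, of "- k"] by simp
          qed
        qed
      qed
      then show ?thesis unfolding PsP_def by blast
    qed
    also have "\<dots> \<longleftrightarrow> PhiP r L a b (lrefl q)"
      unfolding PhiP_def in_span_lrefl_iff by (simp add: lrefl_def)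
    finally show ?thesis .
  qed
  have ex1: "\<exists>!p. PhiP r L a b p" by (rule Phi_ex1[OF lin C d])
  define p0 where "p0 = (THE p. PhiP r L a b p)"
  have p0: "PhiP r L a b p0" unfolding p0_def by (rule theI'[OF ex1])
  have Phi0: "Phi r L a b = p0" unfolding p0_def by (rule Phi_THE[OF False])
  have "(THE p. PsP p) = lrefl p0"
  proof (rule the_equality)
    show "PsP (lrefl p0)" unfolding eqv using p0 by simp
  next
    fix q assume "PsP q"
    then have "PhiP r L a b (lrefl q)" unfolding eqv .
    then have "lrefl q = p0" using p0 ex1 by blast
    then have "lrefl (lrefl q) = lrefl p0" by simp
    then show "q = lrefl p0" by simp
  qed
  then show ?thesis unfolding PS Phi0 .
qed

lemma lrefl_zero[simp]: "lrefl (\<lambda>i. 0) = (\<lambda>i. 0)" unfolding lrefl_def by simp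

lemma lrefl_eq_zero: "lrefl q = (\<lambda>i. 0) \<longleftrightarrow> q = (\<lambda>i. 0)"
  by (metis lrefl_lrefl lrefl_zero)

lemma Xistar_refl:
  assumes lin: "\<forall>j<r. lin_functional (L j)"
    and symm: "\<forall>j<r. \<forall>k::nat. L j (mono (int k)) = L j (mono (- int k))"
    and N: "normal r L a b"
  shows "Xistar r L b a = (\<lambda>j. lrefl (Xi r L a b j))"
proof (cases "antidiag r a b")
  case True
  then have "antidiag r b a" using antidiag_swap by blast
  then show ?thesis using True unfolding Xistar_def Xi_def by simp
next
  case False
  then have na': "\<not> antidiag r b a" using antidiag_swap by blast
  have C: "inC r a b" and d: "det (Tmat r L a b) \<noteq> 0" using N False unfolding normal_def by auto
  define XsP where "XsP = (\<lambda>X. (\<forall>j. r \<le> j \<longrightarrow> X j = (\<lambda>i. 0)) \<and>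
        (\<forall>j<r. in_span (- b j + 1) (a j) (X j)) \<and>
        (\<forall>k. - vabs r b + 1 \<le> k \<and> k \<le> vabs r a - 1 \<longrightarrow>
              (\<Sum>j<r. L j (lshift (X j) (- k))) = 0) \<and>
        (\<Sum>j<r. L j (lshift (X j) (- vabs r a))) = (1::complex))"
  have XS: "Xistar r L b a = (THE X. XsP X)" unfolding Xistar_def XsP_def using na' by simp
  have XI: "Xi r L a b = (THE X. XiP r L a b X)" unfolding Xi_def XiP_def using False by simp
  define R where "R = (\<lambda>X::nat \<Rightarrow> lpoly. \<lambda>j. lrefl (X j))"
  have RR: "R (R X) = X" for X unfolding R_def by simp
  have eqv: "XsP X \<longleftrightarrow> XiP r L a b (R X)" for X
  proof -
    have z: "(\<forall>j. r \<le> j \<longrightarrow> X j = (\<lambda>i. 0)) \<longleftrightarrow> (\<forall>j. r \<le> j \<longrightarrow> R X j = (\<lambda>i. 0))"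
      unfolding R_def lrefl_eq_zero ..
    have s: "(\<forall>j<r. in_span (- b j + 1) (a j) (X j)) \<longleftrightarrow> (\<forall>j<r. in_span (- a j) (b j - 1) (R X j))"
      unfolding R_def in_span_lrefl_iff by simp
    have sums: "(\<Sum>j<r. L j (lshift (R X j) (- k))) = (\<Sum>j<r. L j (lshift (X j) k))"
      if sp: "\<forall>j<r. in_span (- b j + 1) (a j) (X j)" for k
    proof (rule sum.cong[OF refl])
      fix j assume "j \<in> {..<r}"
      then have j: "j < r" by simp
      show "L j (lshift (R X j) (- k)) = L j (lshift (X j) k)"
        unfolding R_def using L_lshift_lrefl[of "L j" "- b j + 1" "a j" "X j" "- k"] lin symm sp j by simp
    qed
    have v: "((\<forall>k. - vabs r b + 1 \<le> k \<and> k \<le> vabs r a - 1 \<longrightarrow> (\<Sum>j<r. L j (lshift (X j) (- k))) = 0) \<and>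
        (\<Sum>j<r. L j (lshift (X j) (- vabs r a))) = 1) \<longleftrightarrow>
        ((\<forall>k. - vabs r a + 1 \<le> k \<and> k \<le> vabs r b - 1 \<longrightarrow> (\<Sum>j<r. L j (lshift (R X j) (- k))) = 0) \<and>
        (\<Sum>j<r. L j (lshift (R X j) (vabs r a))) = 1)"
      if sp: "\<forall>j<r. in_span (- b j + 1) (a j) (X j)"
    proof -
      have e1: "(\<Sum>j<r. L j (lshift (R X j) (vabs r a))) = (\<Sum>j<r. L j (lshift (X j) (- vabs r a)))"
        using sums[OF sp, of "- vabs r a"] by simp
      have e2: "(\<forall>k. - vabs r b + 1 \<le> k \<and> k \<le> vabs r a - 1 \<longrightarrow> (\<Sum>j<r. L j (lshift (X j) (- k))) = 0) \<longleftrightarrow>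
          (\<forall>k. - vabs r a + 1 \<le> k \<and> k \<le> vabs r b - 1 \<longrightarrow> (\<Sum>j<r. L j (lshift (R X j) (- k))) = 0)"
      proof
        assume h: "\<forall>k. - vabs r b + 1 \<le> k \<and> k \<le> vabs r a - 1 \<longrightarrow> (\<Sum>j<r. L j (lshift (X j) (- k))) = 0"
        show "\<forall>k. - vabs r a + 1 \<le> k \<and> k \<le> vabs r b - 1 \<longrightarrow> (\<Sum>j<r. L j (lshift (R X j) (- k))) = 0"
        proof (intro allI impI)
          fix k assume k: "- vabs r a + 1 \<le> k \<and> k \<le> vabs r b - 1"
          have "- vabs r b + 1 \<le> - k \<and> - k \<le> vabs r a - 1" using k by linarith
          then have "(\<Sum>j<r. L j (lshift (X j) (- (- k)))) = 0" using h by blast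
          then show "(\<Sum>j<r. L j (lshift (R X j) (- k))) = 0" using sums[OF sp, of k] by simp
        qed
      next
        assume h: "\<forall>k. - vabs r a + 1 \<le> k \<and> k \<le> vabs r b - 1 \<longrightarrow> (\<Sum>j<r. L j (lshift (R X j) (- k))) = 0"
        show "\<forall>k. - vabs r b + 1 \<le> k \<and> k \<le> vabs r a - 1 \<longrightarrow> (\<Sum>j<r. L j (lshift (X j) (- k))) = 0"
        proof (intro allI impI)
          fix k assume k: "- vabs r b + 1 \<le> k \<and> k \<le> vabs r a - 1"
          have "- vabs r a + 1 \<le> - k \<and> - k \<le> vabs r b - 1" using k by linarith
          then have "(\<Sum>j<r. L j (lshift (R X j) (- (- k)))) = 0" using h by blast
          then show "(\<Sum>j<r. L j (lshift (X j) (- k))) = 0" using sums[OF sp, of "- k"] by simp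
        qed
      qed
      show ?thesis unfolding e1 e2 ..
    qed
    show ?thesis
    proof
      assume h: "XsP X"
      then have sp: "\<forall>j<r. in_span (- b j + 1) (a j) (X j)" unfolding XsP_def by blast
      show "XiP r L a b (R X)" using h unfolding XsP_def XiP_def z s v[OF sp] by blast
    next
      assume h: "XiP r L a b (R X)"
      then have sp: "\<forall>j<r. in_span (- b j + 1) (a j) (X j)" unfolding XiP_def s[symmetric] by blast
      show "XsP X" using h unfolding XsP_def XiP_def z s v[OF sp] by blast
    qed
  qed
  have ex1: "\<exists>!X. XiP r L a b X" by (rule Xi_ex1[OF lin C False d])
  define X0 where "X0 = (THE X. XiP r L a b X)"
  have X0: "XiP r L a b X0" unfolding X0_def by (rule theI'[OF ex1])
  have "(THE X. XsP X) = R X0"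
  proof (rule the_equality)
    show "XsP (R X0)" unfolding eqv RR by (rule X0)
  next
    fix X assume "XsP X"
    then have "XiP r L a b (R X)" unfolding eqv .
    then have "R X = X0" using X0 ex1 by blast
    then have "R (R X) = R X0" by simp
    then show "X = R X0" unfolding RR .
  qed
  then show ?thesis unfolding XS XI X0_def[symmetric] R_def .
qed



lemma L_Phistar:
  assumes lin: "\<forall>j<r. lin_functional (L j)"
    and symm: "\<forall>j<r. \<forall>k::nat. L j (mono (int k)) = L j (mono (- int k))"
    and N: "normal r L a b" and j: "j < r"
  shows "L j (lshift (Phistar r L b a) s) = L j (lshift (Phi r L a b) (- s))"
proof -
  obtain x y where sp: "in_span x y (Phi r L a b)" using Phi_span[OF lin N] by blast
  show ?thesis unfolding Phistar_refl[OF lin symm N]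
    by (rule L_lshift_lrefl[OF _ _ sp]) (use lin symm j in auto)
qed

theorem proposition10p1:
  fixes r :: nat and L :: "nat \<Rightarrow> lpoly \<Rightarrow> complex"
    and n m :: "nat \<Rightarrow> int"
  assumes r: "r \<ge> 1"
    and lin: "\<forall>j<r. lin_functional (L j)"
    and symm: "\<forall>j<r. \<forall>k::nat. L j (mono (int k)) = L j (mono (- int k))"
    and C: "inC r n m"
  shows "(normal r L n m \<longleftrightarrow> normal r L m n) \<and>
    (normal r L n m \<longrightarrow>
      (\<forall>z. z \<noteq> 0 \<longrightarrow> leval (Phistar r L n m) z = leval (Phi r L m n) (1 / z)) \<and>
      (\<forall>j<r. \<forall>z. z \<noteq> 0 \<longrightarrow> leval (Xistar r L n m j) z = leval (Xi r L m n j) (1 / z)) \<and>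
      alpha r L n m = beta r L m n \<and>
      (\<forall>j<r. rho_defined r L n m j \<and> sigma_defined r L m n j \<longrightarrow>
              rho r L n m j = sigma r L m n j) \<and>
      (\<forall>k<r. \<forall>l<r. gamma_defined r L n m k l \<and> eta_defined r L m n k l \<longrightarrow>
              gamma r L n m k l = eta r L m n k l))"
proof (intro conjI impI)
  show sw: "normal r L n m \<longleftrightarrow> normal r L m n" by (rule normal_swap[OF symm])
  assume Nnm: "normal r L n m"
  then have Nmn: "normal r L m n" using sw by blast
  show "\<forall>z. z \<noteq> 0 \<longrightarrow> leval (Phistar r L n m) z = leval (Phi r L m n) (1 / z)"
    unfolding Phistar_refl[OF lin symm Nmn] leval_lrefl by blast
  show "\<forall>j<r. \<forall>z. z \<noteq> 0 \<longrightarrow> leval (Xistar r L n m j) z = leval (Xi r L m n j) (1 / z)"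
    unfolding Xistar_refl[OF lin symm Nmn] leval_lrefl by blast
  show "alpha r L n m = beta r L m n"
    unfolding alpha_def beta_def Phistar_refl[OF lin symm Nnm] by (simp add: lrefl_def)
  show "\<forall>j<r. rho_defined r L n m j \<and> sigma_defined r L m n j \<longrightarrow> rho r L n m j = sigma r L m n j"
  proof (intro allI impI)
    fix j assume j: "j < r" and h: "rho_defined r L n m j \<and> sigma_defined r L m n j"
    then have N1: "normal r L (vsub n (unitv j)) m" unfolding rho_defined_def by blast
    have e1: "L j (lshift (Phistar r L m n) (n j)) = L j (lshift (Phi r L n m) (- n j))"
      by (rule L_Phistar[OF lin symm Nnm j])
    have e2: "L j (lshift (Phistar r L m (vsub n (unitv j))) (n j - 1)) =
        L j (lshift (Phi r L (vsub n (unitv j)) m) (- n j + 1))"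
      using L_Phistar[OF lin symm N1 j, of "n j - 1"] by simp
    show "rho r L n m j = sigma r L m n j" unfolding rho_def sigma_def e1 e2 ..
  qed
  show "\<forall>k<r. \<forall>l<r. gamma_defined r L n m k l \<and> eta_defined r L m n k l \<longrightarrow> gamma r L n m k l = eta r L m n k l"
  proof (intro allI impI)
    fix k l assume k: "k < r" and l: "l < r" and h: "gamma_defined r L n m k l \<and> eta_defined r L m n k l"
    then have N1: "normal r L (vadd n (unitv k)) m" unfolding gamma_defined_def by blast
    have e1: "L l (lshift (Phistar r L m (vadd n (unitv k))) (n l)) = L l (lshift (Phi r L (vadd n (unitv k)) m) (- n l))"
      by (rule L_Phistar[OF lin symm N1 l])
    have e2: "L l (lshift (Phistar r L m n) (n l)) = L l (lshift (Phi r L n m) (- n l))"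
      by (rule L_Phistar[OF lin symm Nnm l])
    show "gamma r L n m k l = eta r L m n k l" unfolding gamma_def eta_def e1 e2 ..
  qed
qed

end
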